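(* Let $\mathcal C$ be a parsummable category, let $m,n\ge0$, $X_\bullet=(X_1,\dots,X_m)\in\mathcal C^{\times m}$, $Y_\bullet=(Y_1,\dots,Y_n)\in\mathcal C^{\times n}$, and let $\phi\colon\mathbf m\times\omega\to\omega$ and $\psi\colon\mathbf n\times\omega\to\omega$ be arbitrary injections. Then the map $\mathrm{Hom}_{\mathcal C}(\phi_*(X_\bullet),\psi_*(Y_\bullet))\to\Sigma_{\mathcal C}(X_\bullet,Y_\bullet)$, $f\mapsto[\psi,f,\phi]$, is bijective.
   Context: Let $\omega=\{1,2,\dots\}$, $\mathbf m=\{1,\dots,m\}$, and $\mathcal M$ the monoid of injections $\omega\to\omega$; $E\mathcal M$ is the category with objects $\mathcal M$ and a unique morphism between any two objects (a strict monoidal category). An $E\mathcal M$-category is a small category with a strict $E\mathcal M$-action; $u_*$ denotes the action of $u\in\mathcal M$ and $[v,u]\colon u_*\Rightarrow v_*$ the natural isomorphism from the morphism $u\to v$. An object $X$ is supported on finite $A\subset\omega$ if $u_*X=X$ whenever $u$ fixes $A$ pointwise; $\mathrm{supp}(X)$ is the intersection of the finite sets supporting $X$; tame means all objects are finitely supported. A parsummable category is a tame $E\mathcal M$-category $\mathcal C$ with an object $0$ of empty support and a functor $+$ defined on the full subcategory of $\mathcal C\times\mathcal C$ of disjointly supported pairs, strictly unital, associative, commutative and $E\mathcal M$-equivariant ($u_*(X+Y)=u_*X+u_*Y$ and $[u,1]_{X+Y}=[u,1]_X+[u,1]_Y$). For an injection $\phi\colon\mathbf m\times\omega\to\omega$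 put $\phi_*(X_\bullet)=\sum_{i=1}^m\phi(i,-)_*(X_i)$, and for another injection $\phi'$ put $[\phi',\phi]_{X_\bullet}=\sum_{i}[\phi'(i,-),\phi(i,-)]_{X_i}\colon\phi_*(X_\bullet)\to\phi'_*(X_\bullet)$. Define $\Sigma_{\mathcal C}(X_\bullet,Y_\bullet)$ as the set of triples $(\psi,f,\phi)$, with $\phi\colon\mathbf m\times\omega\to\omega$ and $\psi\colon\mathbf n\times\omega\to\omega$ injections and $f\colon\phi_*(X_\bullet)\to\psi_*(Y_\bullet)$ a morphism in $\mathcal C$, modulo the equivalence relation $(\psi,f,\phi)\sim(\psi',f',\phi')$ iff $f'=[\psi',\psi]\circ f\circ[\phi,\phi']$; $[\psi,f,\phi]$ denotes the class. *)

theory Defs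
  imports Main
begin

text \<open>The countable set omega = {1,2,...} is modelled by the type nat
(via the relabelling n |-> n-1); injections omega -> omega are the injective
functions nat => nat.  The finite set m = {1,...,m} is modelled by {0..<m}.
An injection m x omega -> omega is a curried function phi :: nat => nat => nat
that is injective on {0..<m} x UNIV (values at i >= m are irrelevant).
A tuple X_1..X_m of objects is a list of length m.\<close>

record ('o, 'm) pcat =
  Ob    :: "'o set"
  Mor   :: "'m set"
  cdom  :: "'m \<Rightarrow> 'o"
  ccod  :: "'m \<Rightarrow> 'o"
  cid   :: "'o \<Rightarrow> 'm"
  ccomp :: "'m \<Rightarrow> 'm \<Rightarrow> 'm"   (* ccomp g f = g o f *)
  act   :: "(nat \<Rightarrow> nat) \<Rightarrow> 'o \<Rightarrow> 'o"
  actm  :: "(nat \<Rightarrow> nat) \<Rightarrow> 'm \<Rightarrow> 'm"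
  tr    :: "(nat \<Rightarrow> nat) \<Rightarrow> (nat \<Rightarrow> nat) \<Rightarrow> 'o \<Rightarrow> 'm" (* tr v u X = [v,u]_X : u_*X -> v_*X *)
  zero  :: "'o"
  plus  :: "'o \<Rightarrow> 'o \<Rightarrow> 'o"
  plusm :: "'m \<Rightarrow> 'm \<Rightarrow> 'm"

definition Hom :: "('o, 'm, 'z) pcat_scheme \<Rightarrow> 'o \<Rightarrow> 'o \<Rightarrow> 'm set" where
  "Hom C X Y = {f \<in> Mor C. cdom C f = X \<and> ccod C f = Y}"

definition is_category :: "('o, 'm, 'z) pcat_scheme \<Rightarrow> bool" where
  "is_category C \<longleftrightarrow>
     (\<forall>f \<in> Mor C. cdom C f \<in> Ob C \<and> ccod C f \<in> Ob C) \<and>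
     (\<forall>X \<in> Ob C. cid C X \<in> Hom C X X) \<and>
     (\<forall>f \<in> Mor C. \<forall>g \<in> Mor C. ccod C f = cdom C g \<longrightarrow>
         ccomp C g f \<in> Hom C (cdom C f) (ccod C g)) \<and>
     (\<forall>f \<in> Mor C. ccomp C (cid C (ccod C f)) f = f \<and> ccomp C f (cid C (cdom C f)) = f) \<and>
     (\<forall>f \<in> Mor C. \<forall>g \<in> Mor C. \<forall>h \<in> Mor C. ccod C f = cdom C g \<longrightarrow> ccod C g = cdom C h \<longrightarrow>
         ccomp C h (ccomp C g f) = ccomp C (ccomp C h g) f)"

text \<open>Strict action of the strict monoidal category EM (objects: injections,
unique morphism between any two objects, tensor = composition).  The action
functor EM x C -> C is (u -> v, f : X -> Y) |-> v_* f o [v,u]_X; the axioms below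
say that this is a functor which is strictly associative and unital.\<close>

definition is_EM_category :: "('o, 'm, 'z) pcat_scheme \<Rightarrow> bool" where
  "is_EM_category C \<longleftrightarrow> is_category C \<and>
     (\<forall>u. inj u \<longrightarrow>
        (\<forall>X \<in> Ob C. act C u X \<in> Ob C \<and> actm C u (cid C X) = cid C (act C u X)) \<and>
        (\<forall>f \<in> Mor C. actm C u f \<in> Hom C (act C u (cdom C f)) (act C u (ccod C f))) \<and>
        (\<forall>f \<in> Mor C. \<forall>g \<in> Mor C. ccod C f = cdom C g \<longrightarrow>
            actm C u (ccomp C g f) = ccomp C (actm C u g) (actm C u f))) \<and>
     (\<forall>X \<in> Ob C. act C id X = X) \<and> (\<forall>f \<in> Mor C. actm C id f = f) \<and>
     (\<forall>u v. inj u \<longrightarrow> inj v \<longrightarrow>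
        (\<forall>X \<in> Ob C. act C (u \<circ> v) X = act C u (act C v X)) \<and>
        (\<forall>f \<in> Mor C. actm C (u \<circ> v) f = actm C u (actm C v f))) \<and>
     (\<forall>u v. inj u \<longrightarrow> inj v \<longrightarrow>
        (\<forall>X \<in> Ob C. tr C v u X \<in> Hom C (act C u X) (act C v X)) \<and>
        (\<forall>f \<in> Mor C. ccomp C (tr C v u (ccod C f)) (actm C u f)
                     = ccomp C (actm C v f) (tr C v u (cdom C f)))) \<and>
     (\<forall>u. inj u \<longrightarrow> (\<forall>X \<in> Ob C. tr C u u X = cid C (act C u X))) \<and>
     (\<forall>u v w. inj u \<longrightarrow> inj v \<longrightarrow> inj w \<longrightarrow>
        (\<forall>X \<in> Ob C. ccomp C (tr C w v X) (tr C v u X) = tr C w u X)) \<and>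
     (\<forall>u u' w w'. inj u \<longrightarrow> inj u' \<longrightarrow> inj w \<longrightarrow> inj w' \<longrightarrow>
        (\<forall>X \<in> Ob C. ccomp C (actm C w' (tr C u' u X)) (tr C w' w (act C u X))
                     = tr C (w' \<circ> u') (w \<circ> u) X))"

definition supported_on :: "('o, 'm, 'z) pcat_scheme \<Rightarrow> 'o \<Rightarrow> nat set \<Rightarrow> bool" where
  "supported_on C X A \<longleftrightarrow> (\<forall>u. inj u \<longrightarrow> (\<forall>a \<in> A. u a = a) \<longrightarrow> act C u X = X)"

definition supp :: "('o, 'm, 'z) pcat_scheme \<Rightarrow> 'o \<Rightarrow> nat set" where
  "supp C X = \<Inter> {A. finite A \<and> supported_on C X A}"

definition tame :: "('o, 'm, 'z) pcat_scheme \<Rightarrow> bool" where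
  "tame C \<longleftrightarrow> (\<forall>X \<in> Ob C. \<exists>A. finite A \<and> supported_on C X A)"

definition disj :: "('o, 'm, 'z) pcat_scheme \<Rightarrow> 'o \<Rightarrow> 'o \<Rightarrow> bool" where
  "disj C X Y \<longleftrightarrow> X \<in> Ob C \<and> Y \<in> Ob C \<and> supp C X \<inter> supp C Y = {}"

definition parsummable :: "('o, 'm, 'z) pcat_scheme \<Rightarrow> bool" where
  "parsummable C \<longleftrightarrow> is_EM_category C \<and> tame C \<and>
     zero C \<in> Ob C \<and> supp C (zero C) = {} \<and>
     \<comment> \<open>+ is a functor on the full subcategory of disjointly supported pairs\<close>
     (\<forall>X Y. disj C X Y \<longrightarrow> plus C X Y \<in> Ob C) \<and>
     (\<forall>X Y X' Y' f g. disj C X Y \<longrightarrow> disj C X' Y' \<longrightarrow> f \<in> Hom C X X' \<longrightarrow> g \<in> Hom C Y Y' \<longrightarrow>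
        plusm C f g \<in> Hom C (plus C X Y) (plus C X' Y')) \<and>
     (\<forall>X Y. disj C X Y \<longrightarrow> plusm C (cid C X) (cid C Y) = cid C (plus C X Y)) \<and>
     (\<forall>X Y X' Y' X'' Y'' f g f' g'. disj C X Y \<longrightarrow> disj C X' Y' \<longrightarrow> disj C X'' Y'' \<longrightarrow>
        f \<in> Hom C X X' \<longrightarrow> g \<in> Hom C Y Y' \<longrightarrow> f' \<in> Hom C X' X'' \<longrightarrow> g' \<in> Hom C Y' Y'' \<longrightarrow>
        plusm C (ccomp C f' f) (ccomp C g' g) = ccomp C (plusm C f' g') (plusm C f g)) \<and>
     \<comment> \<open>strictly unital\<close>
     (\<forall>X \<in> Ob C. plus C (zero C) X = X \<and> plus C X (zero C) = X) \<and>
     (\<forall>f \<in> Mor C. plusm C (cid C (zero C)) f = f \<and> plusm C f (cid C (zero C)) = f) \<and>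
     \<comment> \<open>associative\<close>
     (\<forall>X Y Z. disj C X Y \<longrightarrow> disj C X Z \<longrightarrow> disj C Y Z \<longrightarrow>
        plus C (plus C X Y) Z = plus C X (plus C Y Z)) \<and>
     (\<forall>X Y Z X' Y' Z' f g h. disj C X Y \<longrightarrow> disj C X Z \<longrightarrow> disj C Y Z \<longrightarrow>
        disj C X' Y' \<longrightarrow> disj C X' Z' \<longrightarrow> disj C Y' Z' \<longrightarrow>
        f \<in> Hom C X X' \<longrightarrow> g \<in> Hom C Y Y' \<longrightarrow> h \<in> Hom C Z Z' \<longrightarrow>
        plusm C (plusm C f g) h = plusm C f (plusm C g h)) \<and>
     \<comment> \<open>commutative\<close>
     (\<forall>X Y. disj C X Y \<longrightarrow> plus C X Y = plus C Y X) \<and>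
     (\<forall>X Y X' Y' f g. disj C X Y \<longrightarrow> disj C X' Y' \<longrightarrow> f \<in> Hom C X X' \<longrightarrow> g \<in> Hom C Y Y' \<longrightarrow>
        plusm C f g = plusm C g f) \<and>
     \<comment> \<open>EM-equivariant\<close>
     (\<forall>u X Y. inj u \<longrightarrow> disj C X Y \<longrightarrow>
        act C u (plus C X Y) = plus C (act C u X) (act C u Y) \<and>
        tr C u id (plus C X Y) = plusm C (tr C u id X) (tr C u id Y)) \<and>
     (\<forall>u X Y X' Y' f g. inj u \<longrightarrow> disj C X Y \<longrightarrow> disj C X' Y' \<longrightarrow>
        f \<in> Hom C X X' \<longrightarrow> g \<in> Hom C Y Y' \<longrightarrow>
        actm C u (plusm C f g) = plusm C (actm C u f) (actm C u g))"

fun sumO :: "('o, 'm, 'z) pcat_scheme \<Rightarrow> 'o list \<Rightarrow> 'o" where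
  "sumO C [] = zero C"
| "sumO C (X # Xs) = plus C X (sumO C Xs)"

fun sumM :: "('o, 'm, 'z) pcat_scheme \<Rightarrow> 'm list \<Rightarrow> 'm" where
  "sumM C [] = cid C (zero C)"
| "sumM C (f # fs) = plusm C f (sumM C fs)"

definition inj_tuple :: "nat \<Rightarrow> (nat \<Rightarrow> nat \<Rightarrow> nat) \<Rightarrow> bool" where
  "inj_tuple m \<phi> \<longleftrightarrow> inj_on (\<lambda>(i, x). \<phi> i x) ({..<m} \<times> UNIV)"

definition pstar :: "('o, 'm, 'z) pcat_scheme \<Rightarrow> (nat \<Rightarrow> nat \<Rightarrow> nat) \<Rightarrow> 'o list \<Rightarrow> 'o" where
  "pstar C \<phi> Xs = sumO C (map (\<lambda>i. act C (\<phi> i) (Xs ! i)) [0..<length Xs])"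

definition pbr :: "('o, 'm, 'z) pcat_scheme \<Rightarrow> (nat \<Rightarrow> nat \<Rightarrow> nat) \<Rightarrow> (nat \<Rightarrow> nat \<Rightarrow> nat) \<Rightarrow> 'o list \<Rightarrow> 'm" where
  "pbr C \<phi>' \<phi> Xs = sumM C (map (\<lambda>i. tr C (\<phi>' i) (\<phi> i) (Xs ! i)) [0..<length Xs])"

definition Triples :: "('o, 'm, 'z) pcat_scheme \<Rightarrow> 'o list \<Rightarrow> 'o list
     \<Rightarrow> ((nat \<Rightarrow> nat \<Rightarrow> nat) \<times> 'm \<times> (nat \<Rightarrow> nat \<Rightarrow> nat)) set" where
  "Triples C Xs Ys = {(\<psi>, f, \<phi>). inj_tuple (length Xs) \<phi> \<and> inj_tuple (length Ys) \<psi> \<and>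
       f \<in> Hom C (pstar C \<phi> Xs) (pstar C \<psi> Ys)}"

definition SigRel :: "('o, 'm, 'z) pcat_scheme \<Rightarrow> 'o list \<Rightarrow> 'o list
     \<Rightarrow> (((nat \<Rightarrow> nat \<Rightarrow> nat) \<times> 'm \<times> (nat \<Rightarrow> nat \<Rightarrow> nat)) \<times>
         ((nat \<Rightarrow> nat \<Rightarrow> nat) \<times> 'm \<times> (nat \<Rightarrow> nat \<Rightarrow> nat))) set" where
  "SigRel C Xs Ys = {((\<psi>, f, \<phi>), (\<psi>', f', \<phi>')).
       (\<psi>, f, \<phi>) \<in> Triples C Xs Ys \<and> (\<psi>', f', \<phi>') \<in> Triples C Xs Ys \<and>
       f' = ccomp C (pbr C \<psi>' \<psi> Ys) (ccomp C f (pbr C \<phi> \<phi>' Xs))}"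

definition Sigma_C :: "('o, 'm, 'z) pcat_scheme \<Rightarrow> 'o list \<Rightarrow> 'o list
     \<Rightarrow> ((nat \<Rightarrow> nat \<Rightarrow> nat) \<times> 'm \<times> (nat \<Rightarrow> nat \<Rightarrow> nat)) set set" where
  "Sigma_C C Xs Ys = Triples C Xs Ys // SigRel C Xs Ys"

definition sclass :: "('o, 'm, 'z) pcat_scheme \<Rightarrow> 'o list \<Rightarrow> 'o list
     \<Rightarrow> (nat \<Rightarrow> nat \<Rightarrow> nat) \<Rightarrow> 'm \<Rightarrow> (nat \<Rightarrow> nat \<Rightarrow> nat)
     \<Rightarrow> ((nat \<Rightarrow> nat \<Rightarrow> nat) \<times> 'm \<times> (nat \<Rightarrow> nat \<Rightarrow> nat)) set" where
  "sclass C Xs Ys \<psi> f \<phi> = SigRel C Xs Ys `` {(\<psi>, f, \<phi>)}"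

end

theory Submission imports Defs begin
lemma em_cat: assumes "is_EM_category C" shows "is_category C"
  using assms unfolding is_EM_category_def by (elim conjE) assumption

lemma em_act: assumes "is_EM_category C" shows "\<forall>u. inj u \<longrightarrow>
        (\<forall>X \<in> Ob C. act C u X \<in> Ob C \<and> actm C u (cid C X) = cid C (act C u X)) \<and>
        (\<forall>f \<in> Mor C. actm C u f \<in> Hom C (act C u (cdom C f)) (act C u (ccod C f))) \<and>
        (\<forall>f \<in> Mor C. \<forall>g \<in> Mor C. ccod C f = cdom C g \<longrightarrow>
            actm C u (ccomp C g f) = ccomp C (actm C u g) (actm C u f))"
  using assms unfolding is_EM_category_def by (elim conjE) assumption

lemma em_comp: assumes "is_EM_category C" shows "\<forall>u v. inj u \<longrightarrow> inj v \<longrightarrow>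
        (\<forall>X \<in> Ob C. act C (u \<circ> v) X = act C u (act C v X)) \<and>
        (\<forall>f \<in> Mor C. actm C (u \<circ> v) f = actm C u (actm C v f))"
  using assms unfolding is_EM_category_def by (elim conjE) assumption

lemma em_tr: assumes "is_EM_category C" shows "\<forall>u v. inj u \<longrightarrow> inj v \<longrightarrow>
        (\<forall>X \<in> Ob C. tr C v u X \<in> Hom C (act C u X) (act C v X)) \<and>
        (\<forall>f \<in> Mor C. ccomp C (tr C v u (ccod C f)) (actm C u f)
                     = ccomp C (actm C v f) (tr C v u (cdom C f)))"
  using assms unfolding is_EM_category_def by (elim conjE) assumption

lemma em_trid: assumes "is_EM_category C" shows "\<forall>u. inj u \<longrightarrow> (\<forall>X \<in> Ob C. tr C u u X = cid C (act C u X))"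
  using assms unfolding is_EM_category_def by (elim conjE) assumption

lemma em_trcomp: assumes "is_EM_category C" shows "\<forall>u v w. inj u \<longrightarrow> inj v \<longrightarrow> inj w \<longrightarrow>
        (\<forall>X \<in> Ob C. ccomp C (tr C w v X) (tr C v u X) = tr C w u X)"
  using assms unfolding is_EM_category_def by (elim conjE) assumption
lemma cat_dom: assumes "is_category C" shows "(\<forall>f \<in> Mor C. cdom C f \<in> Ob C \<and> ccod C f \<in> Ob C)"
  using assms unfolding is_category_def by (elim conjE) assumption

lemma cat_id: assumes "is_category C" shows "(\<forall>X \<in> Ob C. cid C X \<in> Hom C X X)"
  using assms unfolding is_category_def by (elim conjE) assumption

lemma cat_comp: assumes "is_category C" shows "(\<forall>f \<in> Mor C. \<forall>g \<in> Mor C. ccod C f = cdom C g \<longrightarrow>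
         ccomp C g f \<in> Hom C (cdom C f) (ccod C g))"
  using assms unfolding is_category_def by (elim conjE) assumption

lemma cat_unit: assumes "is_category C" shows "(\<forall>f \<in> Mor C. ccomp C (cid C (ccod C f)) f = f \<and> ccomp C f (cid C (cdom C f)) = f)"
  using assms unfolding is_category_def by (elim conjE) assumption

lemma cat_assoc: assumes "is_category C" shows "(\<forall>f \<in> Mor C. \<forall>g \<in> Mor C. \<forall>h \<in> Mor C. ccod C f = cdom C g \<longrightarrow> ccod C g = cdom C h \<longrightarrow>
         ccomp C h (ccomp C g f) = ccomp C (ccomp C h g) f)"
  using assms unfolding is_category_def by (elim conjE) assumption

lemma ps_em: assumes "parsummable C" shows "is_EM_category C"
  using assms unfolding parsummable_def by (elim conjE) assumption

lemma ps_tame: assumes "parsummable C" shows "tame C"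
  using assms unfolding parsummable_def by (elim conjE) assumption

lemma ps_zero: assumes "parsummable C" shows "zero C \<in> Ob C"
  using assms unfolding parsummable_def by (elim conjE) assumption

lemma ps_suppzero: assumes "parsummable C" shows "supp C (zero C) = {}"
  using assms unfolding parsummable_def by (elim conjE) assumption

lemma ps_plusob: assumes "parsummable C" shows "(\<forall>X Y. disj C X Y \<longrightarrow> plus C X Y \<in> Ob C)"
  using assms unfolding parsummable_def by (elim conjE) assumption

lemma ps_plusmhom: assumes "parsummable C" shows "(\<forall>X Y X' Y' f g. disj C X Y \<longrightarrow> disj C X' Y' \<longrightarrow> f \<in> Hom C X X' \<longrightarrow> g \<in> Hom C Y Y' \<longrightarrow>
        plusm C f g \<in> Hom C (plus C X Y) (plus C X' Y'))"
  using assms unfolding parsummable_def by (elim conjE) assumption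

lemma ps_plusmid: assumes "parsummable C" shows "(\<forall>X Y. disj C X Y \<longrightarrow> plusm C (cid C X) (cid C Y) = cid C (plus C X Y))"
  using assms unfolding parsummable_def by (elim conjE) assumption

lemma ps_interch: assumes "parsummable C" shows "(\<forall>X Y X' Y' X'' Y'' f g f' g'. disj C X Y \<longrightarrow> disj C X' Y' \<longrightarrow> disj C X'' Y'' \<longrightarrow>
        f \<in> Hom C X X' \<longrightarrow> g \<in> Hom C Y Y' \<longrightarrow> f' \<in> Hom C X' X'' \<longrightarrow> g' \<in> Hom C Y' Y'' \<longrightarrow>
        plusm C (ccomp C f' f) (ccomp C g' g) = ccomp C (plusm C f' g') (plusm C f g))"
  using assms unfolding parsummable_def by (elim conjE) assumption

lemma ps_unitob: assumes "parsummable C" shows "(\<forall>X \<in> Ob C. plus C (zero C) X = X \<and> plus C X (zero C) = X)"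
  using assms unfolding parsummable_def by (elim conjE) assumption

lemma ps_unitm: assumes "parsummable C" shows "(\<forall>f \<in> Mor C. plusm C (cid C (zero C)) f = f \<and> plusm C f (cid C (zero C)) = f)"
  using assms unfolding parsummable_def by (elim conjE) assumption

lemma ps_assoc: assumes "parsummable C" shows "(\<forall>X Y Z. disj C X Y \<longrightarrow> disj C X Z \<longrightarrow> disj C Y Z \<longrightarrow>
        plus C (plus C X Y) Z = plus C X (plus C Y Z))"
  using assms unfolding parsummable_def by (elim conjE) assumption

lemma ps_assocm: assumes "parsummable C" shows "(\<forall>X Y Z X' Y' Z' f g h. disj C X Y \<longrightarrow> disj C X Z \<longrightarrow> disj C Y Z \<longrightarrow>
        disj C X' Y' \<longrightarrow> disj C X' Z' \<longrightarrow> disj C Y' Z' \<longrightarrow>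
        f \<in> Hom C X X' \<longrightarrow> g \<in> Hom C Y Y' \<longrightarrow> h \<in> Hom C Z Z' \<longrightarrow>
        plusm C (plusm C f g) h = plusm C f (plusm C g h))"
  using assms unfolding parsummable_def by (elim conjE) assumption

lemma ps_comm: assumes "parsummable C" shows "(\<forall>X Y. disj C X Y \<longrightarrow> plus C X Y = plus C Y X)"
  using assms unfolding parsummable_def by (elim conjE) assumption

lemma ps_commm: assumes "parsummable C" shows "(\<forall>X Y X' Y' f g. disj C X Y \<longrightarrow> disj C X' Y' \<longrightarrow> f \<in> Hom C X X' \<longrightarrow> g \<in> Hom C Y Y' \<longrightarrow>
        plusm C f g = plusm C g f)"
  using assms unfolding parsummable_def by (elim conjE) assumption

lemma ps_equiv: assumes "parsummable C" shows "(\<forall>u X Y. inj u \<longrightarrow> disj C X Y \<longrightarrow>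
        act C u (plus C X Y) = plus C (act C u X) (act C u Y) \<and>
        tr C u id (plus C X Y) = plusm C (tr C u id X) (tr C u id Y))"
  using assms unfolding parsummable_def by (elim conjE) assumption

lemma ps_equivm: assumes "parsummable C" shows "(\<forall>u X Y X' Y' f g. inj u \<longrightarrow> disj C X Y \<longrightarrow> disj C X' Y' \<longrightarrow>
        f \<in> Hom C X X' \<longrightarrow> g \<in> Hom C Y Y' \<longrightarrow>
        actm C u (plusm C f g) = plusm C (actm C u f) (actm C u g))"
  using assms unfolding parsummable_def by (elim conjE) assumption


lemma hom_iff: "f \<in> Hom C X Y \<longleftrightarrow> f \<in> Mor C \<and> cdom C f = X \<and> ccod C f = Y"
  unfolding Hom_def by simp

lemma hom_ob: "is_category C \<Longrightarrow> f \<in> Hom C X Y \<Longrightarrow> X \<in> Ob C \<and> Y \<in> Ob C"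
  using cat_dom[of C] unfolding Hom_def by auto

lemma comp_hom: "is_category C \<Longrightarrow> f \<in> Hom C X Y \<Longrightarrow> g \<in> Hom C Y Z \<Longrightarrow> ccomp C g f \<in> Hom C X Z"
  using cat_comp[of C] unfolding Hom_def by auto

lemma id_hom: "is_category C \<Longrightarrow> X \<in> Ob C \<Longrightarrow> cid C X \<in> Hom C X X"
  using cat_id[of C] by auto

lemma id_left: "is_category C \<Longrightarrow> f \<in> Hom C X Y \<Longrightarrow> ccomp C (cid C Y) f = f"
  using cat_unit[of C] unfolding Hom_def by auto

lemma id_right: "is_category C \<Longrightarrow> f \<in> Hom C X Y \<Longrightarrow> ccomp C f (cid C X) = f"
  using cat_unit[of C] unfolding Hom_def by auto

lemma comp_assoc: "is_category C \<Longrightarrow> f \<in> Hom C X Y \<Longrightarrow> g \<in> Hom C Y Z \<Longrightarrow> h \<in> Hom C Z W \<Longrightarrow>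
   ccomp C h (ccomp C g f) = ccomp C (ccomp C h g) f"
  using cat_assoc[of C] unfolding Hom_def by auto

lemma em_act_ob: "is_EM_category C \<Longrightarrow> inj u \<Longrightarrow> X \<in> Ob C \<Longrightarrow> act C u X \<in> Ob C"
  using em_act[of C] by blast

lemma em_act_comp: "is_EM_category C \<Longrightarrow> inj u \<Longrightarrow> inj v \<Longrightarrow> X \<in> Ob C \<Longrightarrow>
   act C (u \<circ> v) X = act C u (act C v X)"
  using em_comp[of C] by blast

lemma act_fix:
  assumes "is_EM_category C" "X \<in> Ob C" "supported_on C X A" "inj u" "inj s" "\<forall>a\<in>A. s a = a"
  shows "act C (u \<circ> s) X = act C u X"
  using assms em_act_comp[of C u s X] unfolding supported_on_def by simp

lemma into_map:
  assumes "(T::nat set) \<inter> A = {}" "infinite T"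
  obtains s where "inj s" "\<forall>a\<in>A. s a = a" "\<forall>x. x \<notin> A \<longrightarrow> s x \<in> T"
proof -
  obtain f :: "nat \<Rightarrow> nat" where f: "inj f" "range f \<subseteq> T"
    using infinite_countable_subset[OF assms(2)] by blast
  define s where "s x = (if x \<in> A then x else f x)" for x
  have "inj s"
  proof (rule injI)
    fix x y assume "s x = s y"
    then show "x = y" using f assms(1) unfolding s_def
      by (auto split: if_splits dest: injD)
  qed
  moreover have "\<forall>a\<in>A. s a = a" unfolding s_def by simp
  moreover have "\<forall>x. x \<notin> A \<longrightarrow> s x \<in> T" using f unfolding s_def by auto
  ultimately show ?thesis using that by blast
qed

lemma inf_even: "finite A \<Longrightarrow> infinite {b::nat. b \<notin> A \<and> even b}"
proof
  assume "finite A" "finite {b::nat. b \<notin> A \<and> even b}"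
  then have "finite (A \<union> {b::nat. b \<notin> A \<and> even b})" by simp
  moreover have "range (\<lambda>n::nat. 2*n) \<subseteq> A \<union> {b::nat. b \<notin> A \<and> even b}" by auto
  moreover have "infinite (range (\<lambda>n::nat. 2*n))"
    using finite_imageD[of "\<lambda>n::nat. 2*n" UNIV] by (auto simp: inj_on_def)
  ultimately show False using finite_subset by blast
qed

lemma inf_odd: "finite A \<Longrightarrow> infinite {b::nat. b \<notin> A \<and> odd b}"
proof
  assume "finite A" "finite {b::nat. b \<notin> A \<and> odd b}"
  then have "finite (A \<union> {b::nat. b \<notin> A \<and> odd b})" by simp
  moreover have "range (\<lambda>n::nat. 2*n+1) \<subseteq> A \<union> {b::nat. b \<notin> A \<and> odd b}" by auto
  moreover have "infinite (range (\<lambda>n::nat. 2*n+1))"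
    using finite_imageD[of "\<lambda>n::nat. 2*n+1" UNIV] by (auto simp: inj_on_def)
  ultimately show False using finite_subset by blast
qed

lemma agree_disj:
  assumes em: "is_EM_category C" and X: "X \<in> Ob C" and fA: "finite A" and sA: "supported_on C X A"
    and p: "inj p" and q: "inj q" and ag: "\<forall>a\<in>A. p a = q a"
    and dj: "p ` (- A) \<inter> q ` (- A) = {}"
  shows "act C p X = act C q X"
proof -
  define Ev where "Ev = {b::nat. b \<notin> A \<and> even b}"
  define Od where "Od = {b::nat. b \<notin> A \<and> odd b}"
  obtain e where e: "inj e" "\<forall>a\<in>A. e a = a" "\<forall>x. x \<notin> A \<longrightarrow> e x \<in> Ev"
    using into_map[of Ev A] inf_even[OF fA] unfolding Ev_def by auto
  obtain od where od: "inj od" "\<forall>a\<in>A. od a = a" "\<forall>x. x \<notin> A \<longrightarrow> od x \<in> Od"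
    using into_map[of Od A] inf_odd[OF fA] unfolding Od_def by auto
  define h where "h x = (if x \<in> A \<or> even x then p x else q x)" for x
  have h: "inj h"
  proof (rule injI)
    fix x y assume hxy: "h x = h y"
    show "x = y"
    proof (cases "x \<in> A \<or> even x")
      case True note x = this
      show ?thesis
      proof (cases "y \<in> A \<or> even y")
        case True then show ?thesis using x hxy p unfolding h_def by (auto dest: injD)
      next
        case False
        then have "h y = q y" "y \<in> - A" unfolding h_def by auto
        then show ?thesis using x hxy dj ag q unfolding h_def
          by (metis (no_types, lifting) ComplI IntI empty_iff image_eqI injD)
      qed
    next
      case False note x = this
      show ?thesis
      proof (cases "y \<in> A \<or> even y")
        case False then show ?thesis using x hxy q unfolding h_def by (auto dest: injD)
      next
        case True
        then have "h x = q x" "x \<in> - A" using x unfolding h_def by auto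
        then show ?thesis using True hxy dj ag q unfolding h_def
          by (metis (no_types, lifting) ComplI IntI empty_iff image_eqI injD)
      qed
    qed
  qed
  have he: "h \<circ> e = p \<circ> e"
  proof
    fix x show "(h \<circ> e) x = (p \<circ> e) x"
      using e unfolding h_def Ev_def by (cases "x \<in> A") auto
  qed
  have ho: "h \<circ> od = q \<circ> od"
  proof
    fix x show "(h \<circ> od) x = (q \<circ> od) x"
      using od ag unfolding h_def Od_def by (cases "x \<in> A") auto
  qed
  have "act C p X = act C (p \<circ> e) X" using act_fix[OF em X sA p e(1,2)] by simp
  also have "\<dots> = act C (h \<circ> e) X" using he by simp
  also have "\<dots> = act C h X" using act_fix[OF em X sA h e(1,2)] by simp
  also have "\<dots> = act C (h \<circ> od) X" using act_fix[OF em X sA h od(1,2)] by simp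
  also have "\<dots> = act C (q \<circ> od) X" using ho by simp
  also have "\<dots> = act C q X" using act_fix[OF em X sA q od(1,2)] by simp
  finally show ?thesis .
qed


lemma agree:
  assumes em: "is_EM_category C" and X: "X \<in> Ob C" and fA: "finite A" and sA: "supported_on C X A"
    and u: "inj u" and w: "inj w" and ag: "\<forall>a\<in>A. u a = w a"
  shows "act C u X = act C w X"
proof -
  define Ev where "Ev = {b::nat. b \<notin> A \<and> even b}"
  define Od where "Od = {b::nat. b \<notin> A \<and> odd b}"
  have iEv: "infinite Ev" using inf_even[OF fA] unfolding Ev_def .
  have iOd: "infinite Od" using inf_odd[OF fA] unfolding Od_def .
  have iB: "infinite (- A)" using fA by (simp add: Compl_eq_Diff_UNIV infinite_UNIV_nat)
  define S1 where "S1 = {b. b \<notin> A \<and> w b \<notin> u ` (- A)}"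
  define S2 where "S2 = {b. b \<notin> A \<and> w b \<in> u ` Ev}"
  define S3 where "S3 = {b. b \<notin> A \<and> w b \<in> u ` Od}"
  have cover: "- A \<subseteq> S1 \<union> S2 \<union> S3"
  proof
    fix b assume b: "b \<in> - A"
    show "b \<in> S1 \<union> S2 \<union> S3"
    proof (cases "w b \<in> u ` (- A)")
      case True
      then obtain c where c: "c \<notin> A" "w b = u c" by auto
      then show ?thesis using b unfolding S2_def S3_def Ev_def Od_def by (cases "even c") auto
    next
      case False then show ?thesis using b unfolding S1_def by auto
    qed
  qed
  have disjEO: "u ` Ev \<inter> u ` Od = {}"
    using u unfolding Ev_def Od_def by (auto dest: injD)
  have "\<exists>S T. S \<subseteq> - A \<and> T \<subseteq> - A \<and> infinite S \<and> infinite T \<and> w ` S \<inter> u ` T = {}"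
  proof (cases "infinite S1")
    case True
    then show ?thesis using iB by (intro exI[of _ S1] exI[of _ "- A"]) (auto simp: S1_def)
  next
    case False note f1 = this
    show ?thesis
    proof (cases "infinite S2")
      case True
      moreover have "w ` S2 \<subseteq> u ` Ev" unfolding S2_def by auto
      ultimately show ?thesis using iOd disjEO
        by (intro exI[of _ S2] exI[of _ Od]) (auto simp: S2_def Od_def)
    next
      case False
      then have "infinite S3" using f1 cover iB by (meson finite_UnI finite_subset)
      moreover have "w ` S3 \<subseteq> u ` Od" unfolding S3_def by auto
      ultimately show ?thesis using iEv disjEO
        by (intro exI[of _ S3] exI[of _ Ev]) (auto simp: S3_def Ev_def)
    qed
  qed
  then obtain S T where ST: "S \<subseteq> - A" "T \<subseteq> - A" "infinite S" "infinite T" "w ` S \<inter> u ` T = {}"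
    by blast
  obtain \<sigma> where \<sigma>: "inj \<sigma>" "\<forall>a\<in>A. \<sigma> a = a" "\<forall>x. x \<notin> A \<longrightarrow> \<sigma> x \<in> T"
    using into_map[of T A] ST by blast
  obtain \<tau> where \<tau>: "inj \<tau>" "\<forall>a\<in>A. \<tau> a = a" "\<forall>x. x \<notin> A \<longrightarrow> \<tau> x \<in> S"
    using into_map[of S A] ST by blast
  have pinj: "inj (u \<circ> \<sigma>)" using u \<sigma> by (simp add: inj_compose)
  have qinj: "inj (w \<circ> \<tau>)" using w \<tau> by (simp add: inj_compose)
  have pq: "\<forall>a\<in>A. (u \<circ> \<sigma>) a = (w \<circ> \<tau>) a" using ag \<sigma> \<tau> by simp
  have dj: "(u \<circ> \<sigma>) ` (- A) \<inter> (w \<circ> \<tau>) ` (- A) = {}"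
  proof -
    have "(u \<circ> \<sigma>) ` (- A) \<subseteq> u ` T" using \<sigma> by auto
    moreover have "(w \<circ> \<tau>) ` (- A) \<subseteq> w ` S" using \<tau> by auto
    ultimately show ?thesis using ST(5) by blast
  qed
  have "act C u X = act C (u \<circ> \<sigma>) X" using act_fix[OF em X sA u \<sigma>(1,2)] by simp
  also have "\<dots> = act C (w \<circ> \<tau>) X" by (rule agree_disj[OF em X fA sA pinj qinj pq dj])
  also have "\<dots> = act C w X" using act_fix[OF em X sA w \<tau>(1,2)] by simp
  finally show ?thesis .
qed

lemma supp_sub: "finite B \<Longrightarrow> supported_on C X B \<Longrightarrow> supp C X \<subseteq> B"
  unfolding supp_def by blast

lemma act_supported:
  assumes em: "is_EM_category C" and X: "X \<in> Ob C" and fA: "finite A" and sA: "supported_on C X A"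
    and u: "inj u"
  shows "supported_on C (act C u X) (u ` A)"
  unfolding supported_on_def
proof (intro allI impI)
  fix v assume v: "inj v" and fx: "\<forall>a\<in>u ` A. v a = a"
  have "act C v (act C u X) = act C (v \<circ> u) X" using em_act_comp[OF em v u X] by simp
  also have "\<dots> = act C u X"
    by (rule agree[OF em X fA sA]) (use u v fx in \<open>auto simp: inj_compose\<close>)
  finally show "act C v (act C u X) = act C u X" .
qed

lemma plus_supported:
  assumes P: "parsummable C" and d: "disj C X Y" and sX: "supported_on C X SX" and sY: "supported_on C Y F"
  shows "supported_on C (plus C X Y) (SX \<union> F)"
  unfolding supported_on_def
proof (intro allI impI)
  fix v assume v: "inj v" and fx: "\<forall>a\<in>SX \<union> F. v a = a"
  have "act C v (plus C X Y) = plus C (act C v X) (act C v Y)" using ps_equiv[OF P, rule_format, OF v d] by (rule conjunct1)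
  also have "\<dots> = plus C X Y" using sX sY v fx unfolding supported_on_def by simp
  finally show "act C v (plus C X Y) = plus C X Y" .
qed

lemma supp_plus:
  assumes P: "parsummable C" and d: "disj C X Y" and fX: "finite SX" and sX: "supported_on C X SX"
  shows "supp C (plus C X Y) \<subseteq> SX \<union> supp C Y"
proof
  fix x assume x: "x \<in> supp C (plus C X Y)"
  show "x \<in> SX \<union> supp C Y"
  proof (cases "x \<in> SX")
    case False
    have "x \<in> F" if "finite F" "supported_on C Y F" for F
    proof -
      have "supported_on C (plus C X Y) (SX \<union> F)" by (rule plus_supported[OF P d sX that(2)])
      then have "supp C (plus C X Y) \<subseteq> SX \<union> F" by (rule supp_sub[rotated]) (simp add: fX that(1))
      then have "x \<in> SX \<union> F" using x by (rule subsetD)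
      then show ?thesis using False by simp
    qed
    then have "x \<in> supp C Y" unfolding supp_def by (intro InterI) simp
    then show ?thesis by simp
  qed simp
qed


definition good :: "('o, 'm, 'z) pcat_scheme \<Rightarrow> (nat \<Rightarrow> 'o) \<Rightarrow> (nat \<Rightarrow> nat set) \<Rightarrow> nat \<Rightarrow> nat \<Rightarrow> bool" where
  "good C Z S k m \<longleftrightarrow> (\<forall>i\<in>{k..<m}. Z i \<in> Ob C \<and> finite (S i) \<and> supported_on C (Z i) (S i)) \<and>
     (\<forall>i\<in>{k..<m}. \<forall>j\<in>{k..<m}. i \<noteq> j \<longrightarrow> S i \<inter> S j = {})"

lemma good_Suc: "good C Z S k m \<Longrightarrow> good C Z S (Suc k) m"
  unfolding good_def by auto

lemma sumO_step:
  assumes P: "parsummable C" and g: "good C Z S k m" and km: "k < m"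
    and IH: "sumO C (map Z [Suc k..<m]) \<in> Ob C \<and> supp C (sumO C (map Z [Suc k..<m])) \<subseteq> \<Union> (S ` {Suc k..<m})"
  shows "disj C (Z k) (sumO C (map Z [Suc k..<m]))"
    and "sumO C (map Z [k..<m]) \<in> Ob C \<and> supp C (sumO C (map Z [k..<m])) \<subseteq> \<Union> (S ` {k..<m})"
proof -
  have kk: "k \<in> {k..<m}" using km by simp
  have g1: "\<forall>i\<in>{k..<m}. Z i \<in> Ob C \<and> finite (S i) \<and> supported_on C (Z i) (S i)"
    using g unfolding good_def by (rule conjunct1)
  have g2: "\<forall>i\<in>{k..<m}. \<forall>j\<in>{k..<m}. i \<noteq> j \<longrightarrow> S i \<inter> S j = {}"
    using g unfolding good_def by (rule conjunct2)
  have Zk: "Z k \<in> Ob C" "finite (S k)" "supported_on C (Z k) (S k)"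
    using bspec[OF g1 kk] by simp_all
  have dj: "\<forall>j\<in>{Suc k..<m}. S k \<inter> S j = {}"
  proof
    fix j assume j: "j \<in> {Suc k..<m}"
    then have "j \<in> {k..<m}" "k \<noteq> j" by auto
    then show "S k \<inter> S j = {}" using bspec[OF bspec[OF g2 kk]] by simp
  qed
  have dj2: "S k \<inter> \<Union> (S ` {Suc k..<m}) = {}"
  proof (rule equals0I)
    fix x assume "x \<in> S k \<inter> \<Union> (S ` {Suc k..<m})"
    then obtain j where j: "j \<in> {Suc k..<m}" "x \<in> S j" "x \<in> S k" by auto
    have "S k \<inter> S j = {}" using bspec[OF dj j(1)] .
    then show False using j(2,3) by auto
  qed
  have s1: "supp C (Z k) \<subseteq> S k" using supp_sub[OF Zk(2,3)] .
  have s2: "supp C (sumO C (map Z [Suc k..<m])) \<subseteq> \<Union> (S ` {Suc k..<m})" using IH by (rule conjunct2)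
  have "supp C (Z k) \<inter> supp C (sumO C (map Z [Suc k..<m])) \<subseteq> S k \<inter> \<Union> (S ` {Suc k..<m})"
    using s1 s2 by (rule Int_mono)
  then have dd: "supp C (Z k) \<inter> supp C (sumO C (map Z [Suc k..<m])) = {}" using dj2 by (simp only: subset_empty)
  show d: "disj C (Z k) (sumO C (map Z [Suc k..<m]))"
    unfolding disj_def using Zk(1) conjunct1[OF IH] dd by (intro conjI)
  have ob: "plus C (Z k) (sumO C (map Z [Suc k..<m])) \<in> Ob C" using ps_plusob[OF P, rule_format, OF d] .
  have "supp C (plus C (Z k) (sumO C (map Z [Suc k..<m]))) \<subseteq> S k \<union> supp C (sumO C (map Z [Suc k..<m]))"
    using supp_plus[OF P d Zk(2,3)] .
  also have "\<dots> \<subseteq> S k \<union> \<Union> (S ` {Suc k..<m})" using s2 by (rule Un_mono[OF subset_refl])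
  also have "\<dots> \<subseteq> \<Union> (S ` {k..<m})"
  proof (rule Un_least)
    show "\<Union> (S ` {Suc k..<m}) \<subseteq> \<Union> (S ` {k..<m})" by (rule Union_mono, rule image_mono) auto
    show "S k \<subseteq> \<Union> (S ` {k..<m})" using kk by (rule UN_upper)
  qed
  finally have sp: "supp C (plus C (Z k) (sumO C (map Z [Suc k..<m]))) \<subseteq> \<Union> (S ` {k..<m})" .
  have e: "sumO C (map Z [k..<m]) = plus C (Z k) (sumO C (map Z [Suc k..<m]))"
    unfolding upt_conv_Cons[OF km] list.map sumO.simps ..
  show "sumO C (map Z [k..<m]) \<in> Ob C \<and> supp C (sumO C (map Z [k..<m])) \<subseteq> \<Union> (S ` {k..<m})"
    unfolding e using ob sp by (rule conjI)
qed

lemma sumO_good: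
  assumes P: "parsummable C" and g: "good C Z S k m"
  shows "sumO C (map Z [k..<m]) \<in> Ob C \<and> supp C (sumO C (map Z [k..<m])) \<subseteq> \<Union> (S ` {k..<m})"
  using g
proof (induction "m - k" arbitrary: k)
  case 0
  then have e: "[k..<m] = []" by simp
  show ?case unfolding e using ps_zero[OF P] ps_suppzero[OF P] by simp
next
  case (Suc n)
  then have km: "k < m" by simp
  have "n = m - Suc k" using Suc.hyps(2) by simp
  then have IH: "sumO C (map Z [Suc k..<m]) \<in> Ob C \<and> supp C (sumO C (map Z [Suc k..<m])) \<subseteq> \<Union> (S ` {Suc k..<m})"
    using Suc.hyps(1)[OF _ good_Suc[OF Suc.prems]] by blast
  show ?case using sumO_step(2)[OF P Suc.prems km IH] .
qed

lemma good_disj: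
  assumes P: "parsummable C" and g: "good C Z S k m" and km: "k < m"
  shows "disj C (Z k) (sumO C (map Z [Suc k..<m]))"
  using sumO_step(1)[OF P g km sumO_good[OF P good_Suc[OF g]]] .

lemma sumM_hom:
  assumes P: "parsummable C" and gZ: "good C Z S k m" and gW: "good C W T k m"
    and f: "\<forall>i\<in>{k..<m}. f i \<in> Hom C (Z i) (W i)"
  shows "sumM C (map f [k..<m]) \<in> Hom C (sumO C (map Z [k..<m])) (sumO C (map W [k..<m]))"
  using gZ gW f
proof (induction "m - k" arbitrary: k)
  case 0
  then have e: "[k..<m] = []" by simp
  show ?case unfolding e list.map sumM.simps sumO.simps
    using id_hom[OF em_cat[OF ps_em[OF P]] ps_zero[OF P]] .
next
  case (Suc n)
  then have km: "k < m" by simp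
  have n: "n = m - Suc k" using Suc.hyps(2) by simp
  have f': "\<forall>i\<in>{Suc k..<m}. f i \<in> Hom C (Z i) (W i)" using Suc.prems(3) by auto
  have IH: "sumM C (map f [Suc k..<m]) \<in> Hom C (sumO C (map Z [Suc k..<m])) (sumO C (map W [Suc k..<m]))"
    using Suc.hyps(1)[OF n good_Suc[OF Suc.prems(1)] good_Suc[OF Suc.prems(2)] f'] .
  have d1: "disj C (Z k) (sumO C (map Z [Suc k..<m]))" using good_disj[OF P Suc.prems(1) km] .
  have d2: "disj C (W k) (sumO C (map W [Suc k..<m]))" using good_disj[OF P Suc.prems(2) km] .
  have fk: "f k \<in> Hom C (Z k) (W k)" using bspec[OF Suc.prems(3)] km by simp
  have "plusm C (f k) (sumM C (map f [Suc k..<m])) \<in> Hom C (plus C (Z k) (sumO C (map Z [Suc k..<m]))) (plus C (W k) (sumO C (map W [Suc k..<m])))"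
    using ps_plusmhom[OF P, rule_format, OF d1 d2 fk IH] .
  then show ?case unfolding upt_conv_Cons[OF km] list.map sumM.simps sumO.simps .
qed

lemma sumM_id:
  assumes P: "parsummable C" and gZ: "good C Z S k m"
  shows "sumM C (map (\<lambda>i. cid C (Z i)) [k..<m]) = cid C (sumO C (map Z [k..<m]))"
  using gZ
proof (induction "m - k" arbitrary: k)
  case 0
  then have e: "[k..<m] = []" by simp
  show ?case unfolding e list.map sumM.simps sumO.simps ..
next
  case (Suc n)
  then have km: "k < m" by simp
  have n: "n = m - Suc k" using Suc.hyps(2) by simp
  have IH: "sumM C (map (\<lambda>i. cid C (Z i)) [Suc k..<m]) = cid C (sumO C (map Z [Suc k..<m]))"
    using Suc.hyps(1)[OF n good_Suc[OF Suc.prems(1)]] .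
  have d1: "disj C (Z k) (sumO C (map Z [Suc k..<m]))" using good_disj[OF P Suc.prems(1) km] .
  have "plusm C (cid C (Z k)) (cid C (sumO C (map Z [Suc k..<m]))) = cid C (plus C (Z k) (sumO C (map Z [Suc k..<m])))"
    using ps_plusmid[OF P, rule_format, OF d1] .
  then show ?case unfolding upt_conv_Cons[OF km] list.map sumM.simps sumO.simps IH .
qed

lemma sumM_comp:
  assumes P: "parsummable C" and gZ: "good C Z S k m" and gW: "good C W T k m" and gV: "good C V U k m"
    and f: "\<forall>i\<in>{k..<m}. f i \<in> Hom C (Z i) (W i)"
    and g: "\<forall>i\<in>{k..<m}. g i \<in> Hom C (W i) (V i)"
  shows "sumM C (map (\<lambda>i. ccomp C (g i) (f i)) [k..<m]) = ccomp C (sumM C (map g [k..<m])) (sumM C (map f [k..<m]))"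
  using gZ gW gV f g
proof (induction "m - k" arbitrary: k)
  case 0
  then have e: "[k..<m] = []" by simp
  show ?case unfolding e list.map sumM.simps
    using id_left[OF em_cat[OF ps_em[OF P]] id_hom[OF em_cat[OF ps_em[OF P]] ps_zero[OF P]]] by (rule sym)
next
  case (Suc n)
  then have km: "k < m" by simp
  have n: "n = m - Suc k" using Suc.hyps(2) by simp
  have f': "\<forall>i\<in>{Suc k..<m}. f i \<in> Hom C (Z i) (W i)" using Suc.prems(4) by auto
  have g': "\<forall>i\<in>{Suc k..<m}. g i \<in> Hom C (W i) (V i)" using Suc.prems(5) by auto
  have IH: "sumM C (map (\<lambda>i. ccomp C (g i) (f i)) [Suc k..<m]) = ccomp C (sumM C (map g [Suc k..<m])) (sumM C (map f [Suc k..<m]))"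
    using Suc.hyps(1)[OF n good_Suc[OF Suc.prems(1)] good_Suc[OF Suc.prems(2)] good_Suc[OF Suc.prems(3)] f' g'] .
  have F: "sumM C (map f [Suc k..<m]) \<in> Hom C (sumO C (map Z [Suc k..<m])) (sumO C (map W [Suc k..<m]))"
    using sumM_hom[OF P good_Suc[OF Suc.prems(1)] good_Suc[OF Suc.prems(2)] f'] .
  have G: "sumM C (map g [Suc k..<m]) \<in> Hom C (sumO C (map W [Suc k..<m])) (sumO C (map V [Suc k..<m]))"
    using sumM_hom[OF P good_Suc[OF Suc.prems(2)] good_Suc[OF Suc.prems(3)] g'] .
  have d1: "disj C (Z k) (sumO C (map Z [Suc k..<m]))" using good_disj[OF P Suc.prems(1) km] .
  have d2: "disj C (W k) (sumO C (map W [Suc k..<m]))" using good_disj[OF P Suc.prems(2) km] .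
  have d3: "disj C (V k) (sumO C (map V [Suc k..<m]))" using good_disj[OF P Suc.prems(3) km] .
  have fk: "f k \<in> Hom C (Z k) (W k)" using bspec[OF Suc.prems(4)] km by simp
  have gk: "g k \<in> Hom C (W k) (V k)" using bspec[OF Suc.prems(5)] km by simp
  have "plusm C (ccomp C (g k) (f k)) (ccomp C (sumM C (map g [Suc k..<m])) (sumM C (map f [Suc k..<m])))
     = ccomp C (plusm C (g k) (sumM C (map g [Suc k..<m]))) (plusm C (f k) (sumM C (map f [Suc k..<m])))"
    using ps_interch[OF P, rule_format, OF d1 d2 d3 fk F gk G] .
  then show ?case unfolding upt_conv_Cons[OF km] list.map sumM.simps IH .
qed

lemma inj_tuple_inj:
  assumes t: "inj_tuple m \<phi>" and i: "i < m"
  shows "inj (\<phi> i)"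
proof (rule injI)
  fix x y assume e: "\<phi> i x = \<phi> i y"
  have "(i, x) = (i, y)"
    using inj_onD[OF t[unfolded inj_tuple_def], of "(i, x)" "(i, y)"] e i by simp
  then show "x = y" by simp
qed

lemma inj_tuple_disj:
  assumes t: "inj_tuple m \<phi>" and i: "i < m" and j: "j < m" and ij: "i \<noteq> j"
  shows "\<phi> i ` A \<inter> \<phi> j ` B = {}"
proof (rule equals0I)
  fix z assume "z \<in> \<phi> i ` A \<inter> \<phi> j ` B"
  then obtain a b where e: "\<phi> i a = \<phi> j b" by blast
  have "(i, a) = (j, b)"
    using inj_onD[OF t[unfolded inj_tuple_def], of "(i, a)" "(j, b)"] e i j by simp
  then show False using ij by simp
qed

lemma exA:
  assumes P: "parsummable C" and L: "set L \<subseteq> Ob C"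
  shows "\<exists>A. \<forall>i<length L. finite (A i) \<and> supported_on C (L ! i) (A i)"
proof -
  have "\<forall>i\<in>{..<length L}. \<exists>B. finite B \<and> supported_on C (L ! i) B"
  proof
    fix i assume "i \<in> {..<length L}"
    then have "L ! i \<in> Ob C" using L by (simp add: subset_iff)
    then show "\<exists>B. finite B \<and> supported_on C (L ! i) B"
      using ps_tame[OF P] unfolding tame_def by (rule bspec[rotated])
  qed
  then obtain A where "\<forall>i\<in>{..<length L}. finite (A i) \<and> supported_on C (L ! i) (A i)"
    by (rule bchoice[THEN exE])
  then show ?thesis by auto
qed

lemma good_pstar:
  assumes P: "parsummable C" and L: "set L \<subseteq> Ob C"
    and A: "\<forall>i<length L. finite (A i) \<and> supported_on C (L ! i) (A i)"
    and \<phi>: "inj_tuple (length L) \<phi>"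
  shows "good C (\<lambda>i. act C (\<phi> i) (L ! i)) (\<lambda>i. \<phi> i ` A i) 0 (length L)"
  unfolding good_def
proof (intro conjI ballI impI)
  fix i assume i: "i \<in> {0..<length L}"
  have X: "L ! i \<in> Ob C" using L i by auto
  have u: "inj (\<phi> i)" using inj_tuple_inj[OF \<phi>] i by simp
  show "act C (\<phi> i) (L ! i) \<in> Ob C" using em_act_ob[OF ps_em[OF P] u X] .
  show "finite (\<phi> i ` A i)" using A i by simp
  show "supported_on C (act C (\<phi> i) (L ! i)) (\<phi> i ` A i)"
    using act_supported[OF ps_em[OF P] X _ _ u] A i by simp
next
  fix i j assume "i \<in> {0..<length L}" "j \<in> {0..<length L}" "i \<noteq> j"
  then show "\<phi> i ` A i \<inter> \<phi> j ` A j = {}" using inj_tuple_disj[OF \<phi>] by simp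
qed

lemma tr_hom: "is_EM_category C \<Longrightarrow> inj u \<Longrightarrow> inj v \<Longrightarrow> X \<in> Ob C \<Longrightarrow> tr C v u X \<in> Hom C (act C u X) (act C v X)"
  by (rule bspec[OF conjunct1[OF em_tr[rule_format]]])

lemma tr_id: "is_EM_category C \<Longrightarrow> inj u \<Longrightarrow> X \<in> Ob C \<Longrightarrow> tr C u u X = cid C (act C u X)"
  by (rule em_trid[rule_format])

lemma tr_comp: "is_EM_category C \<Longrightarrow> inj u \<Longrightarrow> inj v \<Longrightarrow> inj w \<Longrightarrow> X \<in> Ob C \<Longrightarrow>
   ccomp C (tr C w v X) (tr C v u X) = tr C w u X"
  by (rule em_trcomp[rule_format])

lemma nth_ob: "set L \<subseteq> Ob C \<Longrightarrow> i \<in> {0..<length L} \<Longrightarrow> L ! i \<in> Ob C"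
  by (simp add: subset_iff)

lemma pbr_hom:
  assumes P: "parsummable C" and L: "set L \<subseteq> Ob C"
    and \<phi>: "inj_tuple (length L) \<phi>" and \<phi>': "inj_tuple (length L) \<phi>'"
  shows "pbr C \<phi>' \<phi> L \<in> Hom C (pstar C \<phi> L) (pstar C \<phi>' L)"
proof -
  obtain A where A: "\<forall>i<length L. finite (A i) \<and> supported_on C (L ! i) (A i)" using exA[OF P L] by blast
  have "\<forall>i\<in>{0..<length L}. tr C (\<phi>' i) (\<phi> i) (L ! i) \<in> Hom C (act C (\<phi> i) (L ! i)) (act C (\<phi>' i) (L ! i))"
  proof
    fix i assume i: "i \<in> {0..<length L}"
    show "tr C (\<phi>' i) (\<phi> i) (L ! i) \<in> Hom C (act C (\<phi> i) (L ! i)) (act C (\<phi>' i) (L ! i))"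
      using tr_hom[OF ps_em[OF P] inj_tuple_inj[OF \<phi>] inj_tuple_inj[OF \<phi>'] nth_ob[OF L i]] i by simp
  qed
  then show ?thesis unfolding pbr_def pstar_def
    by (rule sumM_hom[OF P good_pstar[OF P L A \<phi>] good_pstar[OF P L A \<phi>']])
qed

lemma pbr_id:
  assumes P: "parsummable C" and L: "set L \<subseteq> Ob C"
    and \<phi>: "inj_tuple (length L) \<phi>"
  shows "pbr C \<phi> \<phi> L = cid C (pstar C \<phi> L)"
proof -
  obtain A where A: "\<forall>i<length L. finite (A i) \<and> supported_on C (L ! i) (A i)" using exA[OF P L] by blast
  have eqm: "map (\<lambda>i. tr C (\<phi> i) (\<phi> i) (L ! i)) [0..<length L] = map (\<lambda>i. cid C (act C (\<phi> i) (L ! i))) [0..<length L]"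
  proof (rule map_cong[OF refl])
    fix i assume "i \<in> set [0..<length L]"
    then have i: "i \<in> {0..<length L}" by simp
    show "tr C (\<phi> i) (\<phi> i) (L ! i) = cid C (act C (\<phi> i) (L ! i))"
      using tr_id[OF ps_em[OF P] inj_tuple_inj[OF \<phi>] nth_ob[OF L i]] i by simp
  qed
  show ?thesis unfolding pbr_def pstar_def eqm
    by (rule sumM_id[OF P good_pstar[OF P L A \<phi>]])
qed

lemma pbr_comp:
  assumes P: "parsummable C" and L: "set L \<subseteq> Ob C"
    and \<phi>: "inj_tuple (length L) \<phi>" and \<phi>': "inj_tuple (length L) \<phi>'" and \<phi>'': "inj_tuple (length L) \<phi>''"
  shows "ccomp C (pbr C \<phi>'' \<phi>' L) (pbr C \<phi>' \<phi> L) = pbr C \<phi>'' \<phi> L"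
proof -
  obtain A where A: "\<forall>i<length L. finite (A i) \<and> supported_on C (L ! i) (A i)" using exA[OF P L] by blast
  have f: "\<forall>i\<in>{0..<length L}. tr C (\<phi>' i) (\<phi> i) (L ! i) \<in> Hom C (act C (\<phi> i) (L ! i)) (act C (\<phi>' i) (L ! i))"
  proof
    fix i assume i: "i \<in> {0..<length L}"
    show "tr C (\<phi>' i) (\<phi> i) (L ! i) \<in> Hom C (act C (\<phi> i) (L ! i)) (act C (\<phi>' i) (L ! i))"
      using tr_hom[OF ps_em[OF P] inj_tuple_inj[OF \<phi>] inj_tuple_inj[OF \<phi>'] nth_ob[OF L i]] i by simp
  qed
  have g: "\<forall>i\<in>{0..<length L}. tr C (\<phi>'' i) (\<phi>' i) (L ! i) \<in> Hom C (act C (\<phi>' i) (L ! i)) (act C (\<phi>'' i) (L ! i))"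
  proof
    fix i assume i: "i \<in> {0..<length L}"
    show "tr C (\<phi>'' i) (\<phi>' i) (L ! i) \<in> Hom C (act C (\<phi>' i) (L ! i)) (act C (\<phi>'' i) (L ! i))"
      using tr_hom[OF ps_em[OF P] inj_tuple_inj[OF \<phi>'] inj_tuple_inj[OF \<phi>''] nth_ob[OF L i]] i by simp
  qed
  have eqm: "map (\<lambda>i. ccomp C (tr C (\<phi>'' i) (\<phi>' i) (L ! i)) (tr C (\<phi>' i) (\<phi> i) (L ! i))) [0..<length L]
      = map (\<lambda>i. tr C (\<phi>'' i) (\<phi> i) (L ! i)) [0..<length L]"
  proof (rule map_cong[OF refl])
    fix i assume "i \<in> set [0..<length L]"
    then have i: "i \<in> {0..<length L}" by simp
    show "ccomp C (tr C (\<phi>'' i) (\<phi>' i) (L ! i)) (tr C (\<phi>' i) (\<phi> i) (L ! i)) = tr C (\<phi>'' i) (\<phi> i) (L ! i)"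
      using tr_comp[OF ps_em[OF P] inj_tuple_inj[OF \<phi>] inj_tuple_inj[OF \<phi>'] inj_tuple_inj[OF \<phi>''] nth_ob[OF L i]] i
      by simp
  qed
  show ?thesis unfolding pbr_def
    using sumM_comp[OF P good_pstar[OF P L A \<phi>] good_pstar[OF P L A \<phi>'] good_pstar[OF P L A \<phi>''] f g, unfolded eqm]
    by (rule sym)
qed

lemma triple_hom: "(\<psi>, f, \<phi>) \<in> Triples C Xs Ys \<longleftrightarrow>
   inj_tuple (length Xs) \<phi> \<and> inj_tuple (length Ys) \<psi> \<and> f \<in> Hom C (pstar C \<phi> Xs) (pstar C \<psi> Ys)"
  unfolding Triples_def by simp

lemma sigrel_iff: "((\<psi>, f, \<phi>), (\<psi>', f', \<phi>')) \<in> SigRel C Xs Ys \<longleftrightarrow>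
   (\<psi>, f, \<phi>) \<in> Triples C Xs Ys \<and> (\<psi>', f', \<phi>') \<in> Triples C Xs Ys \<and>
   f' = ccomp C (pbr C \<psi>' \<psi> Ys) (ccomp C f (pbr C \<phi> \<phi>' Xs))"
  unfolding SigRel_def by simp

lemma sig_equiv:
  assumes P: "parsummable C" and X: "set Xs \<subseteq> Ob C" and Y: "set Ys \<subseteq> Ob C"
  shows "equiv (Triples C Xs Ys) (SigRel C Xs Ys)"
proof (rule equivI)
  have cat: "is_category C" using em_cat[OF ps_em[OF P]] .
  show "SigRel C Xs Ys \<subseteq> Triples C Xs Ys \<times> Triples C Xs Ys" unfolding SigRel_def by auto
  show "refl_on (Triples C Xs Ys) (SigRel C Xs Ys)"
  proof (rule refl_onI)
    fix t assume t: "t \<in> Triples C Xs Ys"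
    obtain \<psi> f \<phi> where tt: "t = (\<psi>, f, \<phi>)" by (cases t) auto
    have h: "inj_tuple (length Xs) \<phi>" "inj_tuple (length Ys) \<psi>" "f \<in> Hom C (pstar C \<phi> Xs) (pstar C \<psi> Ys)"
      using t unfolding tt triple_hom by simp_all
    have "ccomp C (pbr C \<psi> \<psi> Ys) (ccomp C f (pbr C \<phi> \<phi> Xs)) = f"
      using pbr_id[OF P X h(1)] pbr_id[OF P Y h(2)] id_left[OF cat h(3)] id_right[OF cat h(3)] by simp
    then show "(t, t) \<in> SigRel C Xs Ys" using t unfolding tt sigrel_iff by simp
  qed
  show "sym (SigRel C Xs Ys)"
  proof (rule symI)
    fix s t assume st: "(s, t) \<in> SigRel C Xs Ys"
    obtain \<psi> f \<phi> where ss: "s = (\<psi>, f, \<phi>)" by (cases s) auto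
    obtain \<psi>' f' \<phi>' where tt: "t = (\<psi>', f', \<phi>')" by (cases t) auto
    have T: "(\<psi>, f, \<phi>) \<in> Triples C Xs Ys" "(\<psi>', f', \<phi>') \<in> Triples C Xs Ys"
      and f': "f' = ccomp C (pbr C \<psi>' \<psi> Ys) (ccomp C f (pbr C \<phi> \<phi>' Xs))"
      using st unfolding ss tt sigrel_iff by blast+
    have h: "inj_tuple (length Xs) \<phi>" "inj_tuple (length Ys) \<psi>" "f \<in> Hom C (pstar C \<phi> Xs) (pstar C \<psi> Ys)"
      "inj_tuple (length Xs) \<phi>'" "inj_tuple (length Ys) \<psi>'"
      using T unfolding triple_hom by simp_all
    define a where "a = pbr C \<psi>' \<psi> Ys"
    define b where "b = pbr C \<phi> \<phi>' Xs"
    define a' where "a' = pbr C \<psi> \<psi>' Ys"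
    define b' where "b' = pbr C \<phi>' \<phi> Xs"
    have ha: "a \<in> Hom C (pstar C \<psi> Ys) (pstar C \<psi>' Ys)" unfolding a_def using pbr_hom[OF P Y h(2,5)] .
    have ha': "a' \<in> Hom C (pstar C \<psi>' Ys) (pstar C \<psi> Ys)" unfolding a'_def using pbr_hom[OF P Y h(5,2)] .
    have hb: "b \<in> Hom C (pstar C \<phi>' Xs) (pstar C \<phi> Xs)" unfolding b_def using pbr_hom[OF P X h(4,1)] .
    have hb': "b' \<in> Hom C (pstar C \<phi> Xs) (pstar C \<phi>' Xs)" unfolding b'_def using pbr_hom[OF P X h(1,4)] .
    have aa: "ccomp C a' a = cid C (pstar C \<psi> Ys)" unfolding a_def a'_def
      using pbr_comp[OF P Y h(2,5,2)] pbr_id[OF P Y h(2)] by simp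
    have bb: "ccomp C b b' = cid C (pstar C \<phi> Xs)" unfolding b_def b'_def
      using pbr_comp[OF P X h(1,4,1)] pbr_id[OF P X h(1)] by simp
    have fb: "ccomp C f b \<in> Hom C (pstar C \<phi>' Xs) (pstar C \<psi> Ys)" using comp_hom[OF cat hb h(3)] .
    have "ccomp C a' (ccomp C f' b') = ccomp C a' (ccomp C (ccomp C a (ccomp C f b)) b')"
      using f' a_def b_def by simp
    also have "\<dots> = ccomp C a' (ccomp C a (ccomp C (ccomp C f b) b'))"
      using comp_assoc[OF cat hb' fb ha] by simp
    also have "\<dots> = ccomp C a' (ccomp C a (ccomp C f (ccomp C b b')))"
      using comp_assoc[OF cat hb' hb h(3)] by simp
    also have "\<dots> = ccomp C a' (ccomp C a f)" using bb id_right[OF cat h(3)] by simp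
    also have "\<dots> = ccomp C (ccomp C a' a) f" using comp_assoc[OF cat h(3) ha ha'] by simp
    also have "\<dots> = f" using aa id_left[OF cat h(3)] by simp
    finally have "f = ccomp C (pbr C \<psi> \<psi>' Ys) (ccomp C f' (pbr C \<phi>' \<phi> Xs))" unfolding a'_def b'_def by simp
    then show "(t, s) \<in> SigRel C Xs Ys" using T unfolding ss tt sigrel_iff by simp
  qed
  show "trans (SigRel C Xs Ys)"
  proof (rule transI)
    fix s t r assume st: "(s, t) \<in> SigRel C Xs Ys" and tr: "(t, r) \<in> SigRel C Xs Ys"
    obtain \<psi> f \<phi> where ss: "s = (\<psi>, f, \<phi>)" by (cases s) auto
    obtain \<psi>' f' \<phi>' where tt: "t = (\<psi>', f', \<phi>')" by (cases t) auto
    obtain \<psi>'' f'' \<phi>'' where rr: "r = (\<psi>'', f'', \<phi>'')" by (cases r) auto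
    have T: "(\<psi>, f, \<phi>) \<in> Triples C Xs Ys" "(\<psi>', f', \<phi>') \<in> Triples C Xs Ys" "(\<psi>'', f'', \<phi>'') \<in> Triples C Xs Ys"
      and f': "f' = ccomp C (pbr C \<psi>' \<psi> Ys) (ccomp C f (pbr C \<phi> \<phi>' Xs))"
      and f'': "f'' = ccomp C (pbr C \<psi>'' \<psi>' Ys) (ccomp C f' (pbr C \<phi>' \<phi>'' Xs))"
      using st tr unfolding ss tt rr sigrel_iff by blast+
    have h: "inj_tuple (length Xs) \<phi>" "inj_tuple (length Ys) \<psi>" "f \<in> Hom C (pstar C \<phi> Xs) (pstar C \<psi> Ys)"
      "inj_tuple (length Xs) \<phi>'" "inj_tuple (length Ys) \<psi>'"
      "inj_tuple (length Xs) \<phi>''" "inj_tuple (length Ys) \<psi>''"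
      using T unfolding triple_hom by simp_all
    define a1 where "a1 = pbr C \<psi>' \<psi> Ys"
    define b1 where "b1 = pbr C \<phi> \<phi>' Xs"
    define a2 where "a2 = pbr C \<psi>'' \<psi>' Ys"
    define b2 where "b2 = pbr C \<phi>' \<phi>'' Xs"
    have ha1: "a1 \<in> Hom C (pstar C \<psi> Ys) (pstar C \<psi>' Ys)" unfolding a1_def using pbr_hom[OF P Y h(2,5)] .
    have ha2: "a2 \<in> Hom C (pstar C \<psi>' Ys) (pstar C \<psi>'' Ys)" unfolding a2_def using pbr_hom[OF P Y h(5,7)] .
    have hb1: "b1 \<in> Hom C (pstar C \<phi>' Xs) (pstar C \<phi> Xs)" unfolding b1_def using pbr_hom[OF P X h(4,1)] .
    have hb2: "b2 \<in> Hom C (pstar C \<phi>'' Xs) (pstar C \<phi>' Xs)" unfolding b2_def using pbr_hom[OF P X h(6,4)] .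
    have fb: "ccomp C f b1 \<in> Hom C (pstar C \<phi>' Xs) (pstar C \<psi> Ys)" using comp_hom[OF cat hb1 h(3)] .
    have bb: "ccomp C b1 b2 \<in> Hom C (pstar C \<phi>'' Xs) (pstar C \<phi> Xs)" using comp_hom[OF cat hb2 hb1] .
    have fbb: "ccomp C f (ccomp C b1 b2) \<in> Hom C (pstar C \<phi>'' Xs) (pstar C \<psi> Ys)" using comp_hom[OF cat bb h(3)] .
    have "f'' = ccomp C a2 (ccomp C (ccomp C a1 (ccomp C f b1)) b2)"
      using f' f'' a1_def b1_def a2_def b2_def by simp
    also have "\<dots> = ccomp C a2 (ccomp C a1 (ccomp C (ccomp C f b1) b2))"
      using comp_assoc[OF cat hb2 fb ha1] by simp
    also have "\<dots> = ccomp C a2 (ccomp C a1 (ccomp C f (ccomp C b1 b2)))"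
      using comp_assoc[OF cat hb2 hb1 h(3)] by simp
    also have "\<dots> = ccomp C (ccomp C a2 a1) (ccomp C f (ccomp C b1 b2))"
      using comp_assoc[OF cat fbb ha1 ha2] by simp
    also have "\<dots> = ccomp C (pbr C \<psi>'' \<psi> Ys) (ccomp C f (pbr C \<phi> \<phi>'' Xs))"
      unfolding a1_def a2_def b1_def b2_def
      using pbr_comp[OF P Y h(2,5,7)] pbr_comp[OF P X h(6,4,1)] by simp
    finally show "(s, r) \<in> SigRel C Xs Ys" using T unfolding ss rr sigrel_iff by simp
  qed
qed

theorem lemma2p2:
  fixes C :: "('o, 'm, 'z) pcat_scheme"
    and Xs Ys :: "'o list"
    and \<phi> \<psi> :: "nat \<Rightarrow> nat \<Rightarrow> nat"
  assumes "parsummable C"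
    and "set Xs \<subseteq> Ob C" and "set Ys \<subseteq> Ob C"
    and "inj_tuple (length Xs) \<phi>" and "inj_tuple (length Ys) \<psi>"
  shows "bij_betw (\<lambda>f. sclass C Xs Ys \<psi> f \<phi>)
           (Hom C (pstar C \<phi> Xs) (pstar C \<psi> Ys)) (Sigma_C C Xs Ys)"
proof -
  note P = assms(1) and X = assms(2) and Y = assms(3) and \<phi> = assms(4) and \<psi> = assms(5)
  have cat: "is_category C" using em_cat[OF ps_em[OF P]] .
  have eq: "equiv (Triples C Xs Ys) (SigRel C Xs Ys)" using sig_equiv[OF P X Y] .
  have refl: "((\<psi>, f, \<phi>), (\<psi>, f, \<phi>)) \<in> SigRel C Xs Ys" if "f \<in> Hom C (pstar C \<phi> Xs) (pstar C \<psi> Ys)" for f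
  proof -
    have "(\<psi>, f, \<phi>) \<in> Triples C Xs Ys" using that \<phi> \<psi> by (simp add: triple_hom)
    then show ?thesis by (rule refl_onD[OF conjunct1[OF conjunct2[OF eq[unfolded equiv_def]]]])
  qed
  show ?thesis
    unfolding bij_betw_def
  proof (intro conjI)
    show "inj_on (\<lambda>f. sclass C Xs Ys \<psi> f \<phi>) (Hom C (pstar C \<phi> Xs) (pstar C \<psi> Ys))"
    proof (rule inj_onI)
      fix f g assume f: "f \<in> Hom C (pstar C \<phi> Xs) (pstar C \<psi> Ys)" and g: "g \<in> Hom C (pstar C \<phi> Xs) (pstar C \<psi> Ys)"
        and fg: "sclass C Xs Ys \<psi> f \<phi> = sclass C Xs Ys \<psi> g \<phi>"
      have "(\<psi>, g, \<phi>) \<in> sclass C Xs Ys \<psi> g \<phi>" using refl[OF g] unfolding sclass_def by simp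
      then have "(\<psi>, g, \<phi>) \<in> sclass C Xs Ys \<psi> f \<phi>" unfolding fg .
      then have "((\<psi>, f, \<phi>), (\<psi>, g, \<phi>)) \<in> SigRel C Xs Ys" unfolding sclass_def by (rule Image_singleton_iff[THEN iffD1])
      then have "g = ccomp C (pbr C \<psi> \<psi> Ys) (ccomp C f (pbr C \<phi> \<phi> Xs))" unfolding sigrel_iff by simp
      also have "\<dots> = f"
        using pbr_id[OF P X \<phi>] pbr_id[OF P Y \<psi>] id_left[OF cat f] id_right[OF cat f] by simp
      finally show "f = g" by simp
    qed
    show "(\<lambda>f. sclass C Xs Ys \<psi> f \<phi>) ` Hom C (pstar C \<phi> Xs) (pstar C \<psi> Ys) = Sigma_C C Xs Ys"
    proof
      show "(\<lambda>f. sclass C Xs Ys \<psi> f \<phi>) ` Hom C (pstar C \<phi> Xs) (pstar C \<psi> Ys) \<subseteq> Sigma_C C Xs Ys"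
        unfolding Sigma_C_def sclass_def by (rule image_subsetI, rule quotientI) (simp add: triple_hom \<phi> \<psi>)
    next
      show "Sigma_C C Xs Ys \<subseteq> (\<lambda>f. sclass C Xs Ys \<psi> f \<phi>) ` Hom C (pstar C \<phi> Xs) (pstar C \<psi> Ys)"
      proof
        fix Q assume "Q \<in> Sigma_C C Xs Ys"
        then obtain t where Q: "Q = SigRel C Xs Ys `` {t}" and t: "t \<in> Triples C Xs Ys"
          unfolding Sigma_C_def by (auto elim: quotientE)
        obtain \<psi>' f' \<phi>' where tt: "t = (\<psi>', f', \<phi>')" by (cases t) auto
        have h: "inj_tuple (length Xs) \<phi>'" "inj_tuple (length Ys) \<psi>'"
          "f' \<in> Hom C (pstar C \<phi>' Xs) (pstar C \<psi>' Ys)" using t unfolding tt triple_hom by simp_all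
        define f where "f = ccomp C (pbr C \<psi> \<psi>' Ys) (ccomp C f' (pbr C \<phi>' \<phi> Xs))"
        have fH: "f \<in> Hom C (pstar C \<phi> Xs) (pstar C \<psi> Ys)" unfolding f_def
          using comp_hom[OF cat comp_hom[OF cat pbr_hom[OF P X \<phi> h(1)] h(3)] pbr_hom[OF P Y h(2) \<psi>]] .
        have "(t, (\<psi>, f, \<phi>)) \<in> SigRel C Xs Ys"
          using t fH \<phi> \<psi> unfolding tt sigrel_iff triple_hom f_def by simp
        then have "Q = sclass C Xs Ys \<psi> f \<phi>" unfolding Q sclass_def using equiv_class_eq_iff[OF eq] by blast
        then show "Q \<in> (\<lambda>f. sclass C Xs Ys \<psi> f \<phi>) ` Hom C (pstar C \<phi> Xs) (pstar C \<psi> Ys)" using fH by blast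
      qed
    qed
  qed
qed

end
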